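(* Let $U,V\in\mathcal S$ and $D\in\mathbb C(z)[\partial]$. Then $D.U\subset V$ if and only if $D.\overline U\subset\overline V$.
   Context: $\mathcal H$ is the space of entire functions with topology of uniform convergence on compacta; $\mathcal S$ is the set of linear subspaces $V\subset\mathbb C[z]$ with $\rho\,\mathbb C[z]\subset V$ for some nonzero polynomial $\rho$; $\overline V$ is the closure in $\mathcal H$. $\partial=d/dz$ and $D.f$ denotes the action of the differential operator $D$ (with rational coefficients) on the function $f$; "$D.\overline U\subset\overline V$" means that for every $f\in\overline U$, $D.f$ (a meromorphic function) lies in $\overline V$. *)

theory Defs
  imports "HOL-Complex_Analysis.Complex_Analysis" "HOL-Computational_Algebra.Polynomial"
begin

definition in_S :: "complex poly set \<Rightarrow> bool" where
  "in_S V \<longleftrightarrow> 0 \<in> V \<and> (\<forall>p\<in>V. \<forall>q\<in>V. p + q \<in> V) \<and> (\<forall>c. \<forall>p\<in>V. smult c p \<in> V)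
     \<and> (\<exists>\<rho>. \<rho> \<noteq> 0 \<and> (\<forall>p. \<rho> * p \<in> V))"

text \<open>Closure of V in the space H of entire functions with the topology of uniform
convergence on compacta (basic neighbourhoods: sup over a compact K below eps).\<close>
definition H_closure :: "complex poly set \<Rightarrow> (complex \<Rightarrow> complex) set" where
  "H_closure V = {f. f holomorphic_on UNIV \<and>
     (\<forall>K. compact K \<longrightarrow> (\<forall>e>0. \<exists>p\<in>V. \<forall>z\<in>K. norm (f z - poly p z) < e))}"

text \<open>A differential operator D = sum_k (n_k/d_k) d^k with rational coefficients is
represented by the list of pairs (n_k, d_k) with d_k nonzero.\<close>
definition valid_op :: "(complex poly \<times> complex poly) list \<Rightarrow> bool" where
  "valid_op D \<longleftrightarrow> (\<forall>c\<in>set D. snd c \<noteq> 0)"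

definition op_poles :: "(complex poly \<times> complex poly) list \<Rightarrow> complex set" where
  "op_poles D = {z. \<exists>c\<in>set D. poly (snd c) z = 0}"

definition op_apply :: "(complex poly \<times> complex poly) list \<Rightarrow> (complex \<Rightarrow> complex) \<Rightarrow> complex \<Rightarrow> complex" where
  "op_apply D f z = (\<Sum>i<length D. (poly (fst (D!i)) z / poly (snd (D!i)) z) * (deriv ^^ i) f z)"

definition op_maps_poly :: "(complex poly \<times> complex poly) list \<Rightarrow> complex poly set \<Rightarrow> complex poly set \<Rightarrow> bool" where
  "op_maps_poly D U V \<longleftrightarrow> (\<forall>p\<in>U. \<exists>q\<in>V. \<forall>z. z \<notin> op_poles D \<longrightarrow> op_apply D (poly p) z = poly q z)"

text \<open>D.closure(U) subset closure(V): the meromorphic function D.f coincides, off the poles,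
with an entire function lying in closure(V).\<close>
definition op_maps_closure :: "(complex poly \<times> complex poly) list \<Rightarrow> complex poly set \<Rightarrow> complex poly set \<Rightarrow> bool" where
  "op_maps_closure D U V \<longleftrightarrow> (\<forall>f\<in>H_closure U. \<exists>g\<in>H_closure V. \<forall>z. z \<notin> op_poles D \<longrightarrow> op_apply D f z = g z)"

end

theory Submission
  imports Defs "HOL-Computational_Algebra.Fundamental_Theorem_Algebra"
begin

lemma higher_deriv_poly: "(deriv ^^ i) (poly p) = poly ((pderiv ^^ i) p)"
proof (induction i)
  case 0 then show ?case by simp
next
  case (Suc i)
  show ?case
    by (rule ext) (simp add: Suc DERIV_imp_deriv)
qed

lemma maxmod_entire:
  fixes f :: "complex \<Rightarrow> complex"
  assumes "f holomorphic_on UNIV" "0 < R" "\<And>w. dist a w = R \<Longrightarrow> cmod (f w) \<le> M" "dist a z \<le> R"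
  shows "cmod (f z) \<le> M"
proof (rule maximum_modulus_frontier[of f "cball a R"])
  show "f holomorphic_on interior (cball a R)" using assms(1) holomorphic_on_subset by blast
  show "continuous_on (closure (cball a R)) f" using assms(1) holomorphic_on_imp_continuous_on continuous_on_subset by blast
qed (use assms in auto)

lemma eq_off_finite:
  fixes f g :: "complex \<Rightarrow> complex"
  assumes "continuous_on UNIV f" "continuous_on UNIV g" "finite S" "\<And>z. z \<notin> S \<Longrightarrow> f z = g z"
  shows "f z = g z"
proof -
  have ev: "\<forall>\<^sub>F w in at z. w \<notin> S"
    using assms(3) by (metis finite_imp_sparse iso_tuple_UNIV_I open_UNIV sparse_in_eventually_iff)
  have "(f \<longlongrightarrow> f z) (at z)" using assms(1) by (simp add: continuous_on_def)
  moreover have "(g \<longlongrightarrow> g z) (at z)" using assms(2) by (simp add: continuous_on_def)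
  hence "(f \<longlongrightarrow> g z) (at z)"
    by (rule Lim_transform_eventually) (use ev assms(4) in \<open>auto elim: eventually_mono\<close>)
  ultimately show ?thesis by (metis tendsto_unique trivial_limit_at)
qed


definition subsp :: "complex poly set \<Rightarrow> bool" where
  "subsp V \<longleftrightarrow> 0 \<in> V \<and> (\<forall>p\<in>V. \<forall>q\<in>V. p + q \<in> V) \<and> (\<forall>c. \<forall>p\<in>V. smult c p \<in> V)"

definition appr :: "complex poly set \<Rightarrow> (complex \<Rightarrow> complex) \<Rightarrow> bool" where
  "appr V f \<longleftrightarrow> (\<forall>R e. 0 < e \<longrightarrow> (\<exists>p\<in>V. \<forall>z\<in>cball 0 R. cmod (f z - poly p z) < e))"

lemma subsp_diff: "subsp V \<Longrightarrow> p \<in> V \<Longrightarrow> q \<in> V \<Longrightarrow> p - q \<in> V"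
  unfolding subsp_def by (metis diff_conv_add_uminus smult_1_left smult_minus_left)

lemma H_closure_iff: "f \<in> H_closure V \<longleftrightarrow> f holomorphic_on UNIV \<and> appr V f"
proof
  assume "f \<in> H_closure V" then show "f holomorphic_on UNIV \<and> appr V f"
    unfolding H_closure_def appr_def by auto
next
  assume a: "f holomorphic_on UNIV \<and> appr V f"
  show "f \<in> H_closure V"
    unfolding H_closure_def
  proof (intro CollectI conjI allI impI)
    fix K :: "complex set" and e :: real assume "compact K" "0 < e"
    then obtain b where "\<forall>x\<in>K. norm x \<le> b" using compact_imp_bounded bounded_pos by blast
    then have "K \<subseteq> cball 0 b" by auto
    with a \<open>0 < e\<close> show "\<exists>p\<in>V. \<forall>z\<in>K. cmod (f z - poly p z) < e" unfolding appr_def by blast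
  qed (use a in auto)
qed

lemma caseA:
  assumes IH: "\<And>V h. subsp V \<Longrightarrow> (\<forall>p. \<rho>' * p \<in> V) \<Longrightarrow> appr V (poly h) \<Longrightarrow> h \<in> V"
    and V: "subsp V" and rho: "\<forall>p. [:-a,1:] * \<rho>' * p \<in> V" and van: "\<forall>p\<in>V. poly p a = 0"
    and h: "appr V (poly h)"
  shows "h \<in> V"
proof -
  have ha: "poly h a = 0"
  proof (rule ccontr)
    assume "poly h a \<noteq> 0"
    then obtain p where "p \<in> V" "\<forall>z\<in>cball 0 (cmod a). cmod (poly h z - poly p z) < cmod (poly h a)"
      using h unfolding appr_def by (meson zero_less_norm_iff)
    moreover have "a \<in> cball 0 (cmod a)" by simp
    ultimately have "cmod (poly h a - poly p a) < cmod (poly h a)" by blast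
    then show False using van \<open>p \<in> V\<close> by auto
  qed
  then obtain h' where h': "h = [:-a,1:] * h'" using poly_eq_0_iff_dvd by blast
  define V' where "V' = {q. [:-a,1:] * q \<in> V}"
  have V': "subsp V'" using V unfolding subsp_def V'_def
    by (auto simp only: mem_Collect_eq distrib_left mult_smult_right mult_zero_right)
  have rho': "\<forall>p. \<rho>' * p \<in> V'" using rho unfolding V'_def by (auto simp only: mem_Collect_eq mult.assoc)
  have "appr V' (poly h')"
    unfolding appr_def
  proof (intro allI impI)
    fix R e :: real assume e: "0 < e"
    define r where "r = cmod a + \<bar>R\<bar> + 1"
    obtain p where p: "p \<in> V" "\<forall>z\<in>cball 0 (cmod a + r). cmod (poly h z - poly p z) < e/2"
      using h e unfolding appr_def by (meson half_gt_zero)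
    then obtain q where q: "p = [:-a,1:] * q" using van poly_eq_0_iff_dvd by blast
    have qV: "q \<in> V'" using p q V'_def by simp
    have "\<forall>z\<in>cball 0 R. cmod (poly h' z - poly q z) < e"
    proof
      fix z :: complex assume z: "z \<in> cball 0 R"
      have "cmod (poly (h' - q) z) \<le> e/2"
      proof (rule maxmod_entire[where f="poly (h' - q)" and a=a and R=r])
        show "poly (h' - q) holomorphic_on UNIV" by (auto intro!: holomorphic_intros)
        show "0 < r" unfolding r_def by (smt (verit) norm_ge_zero)
        show "dist a z \<le> r" using z unfolding r_def dist_norm
          by (smt (verit) mem_cball_0 norm_minus_commute norm_triangle_ineq4)
      next
        fix w assume w: "dist a w = r"
        have "cmod w \<le> cmod a + r" using w unfolding dist_norm
          by (smt (verit) norm_minus_commute norm_triangle_ineq2)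
        then have "cmod (poly h w - poly p w) < e/2" using p by auto
        also have "poly h w - poly p w = (w - a) * poly (h' - q) w"
          unfolding h' q by (simp add: algebra_simps)
        finally have lt: "cmod (w - a) * cmod (poly (h' - q) w) < e/2" by (simp add: norm_mult)
        have "cmod (w - a) = r" using w by (simp add: dist_norm norm_minus_commute)
        moreover have "1 \<le> r" unfolding r_def by (smt (verit) norm_ge_zero)
        ultimately have "cmod (poly (h' - q) w) \<le> cmod (w - a) * cmod (poly (h' - q) w)"
          by (simp add: mult_le_cancel_right1)
        with lt show "cmod (poly (h' - q) w) \<le> e/2" by linarith
      qed
      then show "cmod (poly h' z - poly q z) < e" using e by simp
    qed
    with qV show "\<exists>p\<in>V'. \<forall>z\<in>cball 0 R. cmod (poly h' z - poly p z) < e" by blast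
  qed
  then have "h' \<in> V'" using IH[OF V' rho'] by blast
  then show ?thesis using h' V'_def by simp
qed


lemma cont_bounded_cball:
  fixes f :: "complex \<Rightarrow> complex"
  assumes "continuous_on UNIV f"
  shows "\<exists>M>0. \<forall>z\<in>cball 0 R. cmod (f z) \<le> M"
proof -
  have "compact (f ` cball 0 R)"
    using assms by (meson compact_cball compact_continuous_image continuous_on_subset subset_UNIV)
  then show ?thesis using compact_imp_bounded bounded_pos by (metis image_eqI)
qed

lemma closure_poly:
  assumes "subsp V" "\<rho> \<noteq> 0" "\<forall>p. \<rho> * p \<in> V" "appr V (poly h)"
  shows "h \<in> V"
  using assms
proof (induction "degree \<rho>" arbitrary: \<rho> V h)
  case 0
  then obtain c where c: "\<rho> = [:c:]" "c \<noteq> 0" by (metis degree_eq_zeroE pCons_0_0)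
  then have "\<rho> * smult (1/c) h = h" by simp
  then show ?case using 0 by metis
next
  case (Suc n)
  have "\<not> constant (poly \<rho>)" using Suc.hyps(2) Fundamental_Theorem_Algebra.constant_degree by (metis nat.distinct(1))
  then obtain a where "poly \<rho> a = 0" using Fundamental_Theorem_Algebra.fundamental_theorem_of_algebra by blast
  then obtain \<rho>' where r: "\<rho> = [:-a,1:] * \<rho>'" using poly_eq_0_iff_dvd by blast
  have r0: "\<rho>' \<noteq> 0" using r Suc.prems by auto
  have dr: "n = degree \<rho>'" proof -
    have "degree \<rho> = degree [:-a,(1::complex):] + degree \<rho>'"
      unfolding r by (rule degree_mult_eq) (use r0 in auto)
    then show ?thesis using Suc.hyps(2) by simp
  qed
  have IH: "\<And>V h. subsp V \<Longrightarrow> (\<forall>p. \<rho>' * p \<in> V) \<Longrightarrow> appr V (poly h) \<Longrightarrow> h \<in> V"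
    using Suc.hyps(1)[OF dr] r0 by blast
  have rho: "\<forall>p. [:-a,1:] * \<rho>' * p \<in> V" using Suc.prems r by simp
  show ?case
  proof (cases "\<forall>p\<in>V. poly p a = 0")
    case True
    then show ?thesis using caseA[OF IH Suc.prems(1) rho True Suc.prems(4)] by blast
  next
    case False
    then obtain u where u: "u \<in> V" "poly u a \<noteq> 0" by blast
    define u1 where "u1 = smult (1 / poly u a) u"
    have u1: "u1 \<in> V" "poly u1 a = 1" using u Suc.prems(1) unfolding u1_def subsp_def by auto
    define V0 where "V0 = {p \<in> V. poly p a = 0}"
    have V0: "subsp V0" using Suc.prems(1) unfolding subsp_def V0_def by auto
    have rho0: "\<forall>p. [:-a,1:] * \<rho>' * p \<in> V0" using rho unfolding V0_def by simp
    define h0 where "h0 = h - smult (poly h a) u1"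
    have "appr V0 (poly h0)"
      unfolding appr_def
    proof (intro allI impI)
      fix R e :: real assume e: "0 < e"
      obtain Mu where Mu: "Mu > 0" "\<forall>z\<in>cball 0 R. cmod (poly u1 z) \<le> Mu"
        using cont_bounded_cball[of "poly u1" R] continuous_at_imp_continuous_on[of UNIV "poly u1"] by auto
      define \<delta> where "\<delta> = e / (2 * (1 + Mu))"
      have d: "\<delta> > 0" using e Mu unfolding \<delta>_def by simp
      obtain p where p: "p \<in> V" "\<forall>z\<in>cball 0 (\<bar>R\<bar> + cmod a). cmod (poly h z - poly p z) < \<delta>"
        using Suc.prems(4) d unfolding appr_def by blast
      define p0 where "p0 = p - smult (poly p a) u1"
      have "smult (poly p a) u1 \<in> V" using u1(1) Suc.prems(1) unfolding subsp_def by blast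
      then have "p0 \<in> V" unfolding p0_def using subsp_diff[OF Suc.prems(1) p(1)] by blast
      moreover have "poly p0 a = 0" unfolding p0_def using u1(2) by simp
      ultimately have p0: "p0 \<in> V0" unfolding V0_def by blast
      have "\<forall>z\<in>cball 0 R. cmod (poly h0 z - poly p0 z) < e"
      proof
        fix z :: complex assume z: "z \<in> cball 0 R"
        have z': "z \<in> cball 0 (\<bar>R\<bar> + cmod a)" using z by (simp, smt (verit) norm_ge_zero)
        have a': "a \<in> cball 0 (\<bar>R\<bar> + cmod a)" by auto
        have "poly h0 z - poly p0 z = (poly h z - poly p z) - (poly h a - poly p a) * poly u1 z"
          unfolding h0_def p0_def by (simp add: algebra_simps)
        then have "cmod (poly h0 z - poly p0 z) \<le> cmod (poly h z - poly p z) + cmod (poly h a - poly p a) * cmod (poly u1 z)"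
          by (metis norm_mult norm_triangle_ineq4)
        also have "\<dots> \<le> \<delta> + \<delta> * Mu"
        proof -
          have f1: "cmod (poly h z - poly p z) < \<delta>" using p(2) z' by blast
          have f2: "cmod (poly h a - poly p a) < \<delta>" using p(2) a' by blast
          have f3: "cmod (poly u1 z) \<le> Mu" using Mu(2) z by blast
          show ?thesis using f1 f2 f3 d by (intro add_mono mult_mono) auto
        qed
        also have "\<dots> = \<delta> * (1 + Mu)" by (simp add: algebra_simps)
        also have "\<dots> = e / 2" unfolding \<delta>_def using Mu(1) by (simp add: divide_simps)
        also have "\<dots> < e" using e by simp
        finally show "cmod (poly h0 z - poly p0 z) < e" .
      qed
      then show "\<exists>p\<in>V0. \<forall>z\<in>cball 0 R. cmod (poly h0 z - poly p z) < e" using p0 by blast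
    qed
    moreover have van0: "\<forall>p\<in>V0. poly p a = 0" unfolding V0_def by simp
    ultimately have "h0 \<in> V0" using caseA[OF IH V0 rho0] by blast
    then have "h0 \<in> V" unfolding V0_def by simp
    moreover have "smult (poly h a) u1 \<in> V" using u1 Suc.prems(1) unfolding subsp_def by blast
    ultimately have "h0 + smult (poly h a) u1 \<in> V" using Suc.prems(1) unfolding subsp_def by blast
    then show ?thesis unfolding h0_def by simp
  qed
qed


lemma entire_poly:
  fixes g :: "complex \<Rightarrow> complex"
  assumes "continuous_on UNIV g" "B \<noteq> 0" "\<forall>z. poly B z * g z = poly P z"
  shows "\<exists>Q. g = poly Q"
  using assms
proof (induction "degree B" arbitrary: B P)
  case 0
  then obtain c where c: "B = [:c:]" "c \<noteq> 0" by (metis degree_eq_zeroE pCons_0_0)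
  from 0 have eq: "\<forall>z. poly B z * g z = poly P z" by blast
  have "g = poly (smult (1/c) P)"
  proof (rule ext)
    fix z
    have "c * g z = poly P z" using spec[OF eq, of z] c by simp
    then show "g z = poly (smult (1/c) P) z" using c by (simp add: field_simps)
  qed
  then show ?case by blast
next
  case (Suc n)
  have "\<not> constant (poly B)" using Suc.hyps(2) Fundamental_Theorem_Algebra.constant_degree by (metis nat.distinct(1))
  then obtain a where "poly B a = 0" using Fundamental_Theorem_Algebra.fundamental_theorem_of_algebra by blast
  then obtain B' where r: "B = [:-a,1:] * B'" using poly_eq_0_iff_dvd by blast
  have r0: "B' \<noteq> 0" using r Suc.prems by auto
  have dr: "n = degree B'"
  proof -
    have "degree B = degree [:-a,(1::complex):] + degree B'"
      unfolding r by (rule degree_mult_eq) (use r0 in auto)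
    then show ?thesis using Suc.hyps(2) by simp
  qed
  have "poly P a = 0" using Suc.prems(3) \<open>poly B a = 0\<close> by (metis mult_zero_left)
  then obtain P' where P': "P = [:-a,1:] * P'" using poly_eq_0_iff_dvd by blast
  have off: "poly B' z * g z = poly P' z" if "z \<notin> {a}" for z
  proof -
    have "(z - a) * (poly B' z * g z) = (z - a) * poly P' z"
    proof -
      have "poly B z * g z = (z - a) * (poly B' z * g z)" unfolding r by (simp add: algebra_simps)
      moreover have "poly P z = (z - a) * poly P' z" unfolding P' by (simp add: algebra_simps)
      ultimately show ?thesis using Suc.prems(3) by metis
    qed
    then show ?thesis using that by simp
  qed
  have "\<forall>z. poly B' z * g z = poly P' z"
  proof
    fix z
    show "poly B' z * g z = poly P' z"
      by (rule eq_off_finite[where S="{a}" and f="\<lambda>z. poly B' z * g z" and g="poly P'"])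
        (use off Suc.prems(1) in \<open>auto intro!: continuous_intros simp: continuous_on_eq_continuous_at\<close>)
  qed
  then show ?case using Suc.hyps(1)[OF dr Suc.prems(1) r0] by blast
qed


lemma deriv_est:
  fixes f h :: "complex \<Rightarrow> complex"
  assumes "f holomorphic_on UNIV" "h holomorphic_on UNIV" "\<forall>w\<in>ball z 1. cmod (f w - h w) < \<delta>"
  shows "cmod ((deriv ^^ i) f z - (deriv ^^ i) h z) \<le> fact i * \<delta>"
proof (cases "i = 0")
  case True
  then show ?thesis using assms(3) by (simp add: less_imp_le)
next
  case False
  have "cmod ((deriv ^^ i) (\<lambda>w. f w - h w) z) \<le> fact i * \<delta> / 1 ^ i"
  proof (rule Cauchy_higher_deriv_bound[where y=0])
    show "(\<lambda>w. f w - h w) holomorphic_on ball z 1"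
      using assms(1,2) by (auto intro!: holomorphic_intros intro: holomorphic_on_subset)
    show "continuous_on (cball z 1) (\<lambda>w. f w - h w)"
      using assms(1,2) holomorphic_on_imp_continuous_on
      by (auto intro!: continuous_intros intro: continuous_on_subset)
    show "\<And>w. w \<in> ball z 1 \<Longrightarrow> f w - h w \<in> ball 0 \<delta>"
      using assms(3) by (simp add: dist_norm norm_minus_commute)
  qed (use False in auto)
  moreover have "(deriv ^^ i) (\<lambda>w. f w - h w) z = (deriv ^^ i) f z - (deriv ^^ i) h z"
    by (rule higher_deriv_diff) (use assms in auto)
  ultimately show ?thesis by simp
qed

lemma B_lower:
  fixes B :: "complex poly"
  assumes "B \<noteq> 0"
  shows "\<exists>c>0. \<exists>r0. \<forall>w. r0 \<le> cmod w \<longrightarrow> c \<le> cmod (poly B w)"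
proof (cases B)
  case (pCons a p)
  show ?thesis
  proof (cases "p = 0")
    case True
    then have "a \<noteq> 0" using pCons assms by simp
    then show ?thesis using pCons True by (intro exI[of _ "cmod a"]) auto
  next
    case False
    obtain r where "\<forall>z. r \<le> norm z \<longrightarrow> 1 \<le> norm (poly (pCons a p) z)"
      using Fundamental_Theorem_Algebra.poly_infinity[OF False] by blast
    then show ?thesis using pCons by (intro exI[of _ 1]) auto
  qed
qed

lemma lim_entire:
  fixes qn :: "nat \<Rightarrow> complex poly" and F :: "complex \<Rightarrow> complex" and Lq :: "nat \<Rightarrow> complex \<Rightarrow> complex"
  assumes Bnz: "B \<noteq> 0"
    and BqL: "\<forall>k z. poly B z * poly (qn k) z = Lq k z"
    and Lest: "\<forall>R. \<exists>C. \<forall>k z. R + 1 \<le> real k \<longrightarrow> z \<in> cball 0 R \<longrightarrow> cmod (F z - Lq k z) \<le> C / (real k + 1)"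
  shows "\<exists>g. g holomorphic_on UNIV \<and> (\<forall>R e. e > 0 \<longrightarrow> (\<exists>k. \<forall>z\<in>cball 0 R. cmod (g z - poly (qn k) z) < e))
             \<and> (\<forall>z. poly B z * g z = F z)"
proof -
  obtain c r0 where c: "c > 0" "\<forall>w. r0 \<le> cmod w \<longrightarrow> c \<le> cmod (poly B w)"
    using B_lower[OF Bnz] by blast
  have Lest': "\<exists>C\<ge>0. \<forall>k z. R + 1 \<le> real k \<longrightarrow> z \<in> cball 0 R \<longrightarrow> cmod (F z - Lq k z) \<le> C / (real k + 1)" for R
  proof -
    obtain C where C: "\<forall>k z. R + 1 \<le> real k \<longrightarrow> z \<in> cball 0 R \<longrightarrow> cmod (F z - Lq k z) \<le> C / (real k + 1)"
      using Lest by blast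
    have "\<forall>k z. R + 1 \<le> real k \<longrightarrow> z \<in> cball 0 R \<longrightarrow> cmod (F z - Lq k z) \<le> max C 0 / (real k + 1)"
    proof (intro allI impI)
      fix k and z :: complex assume "R + 1 \<le> real k" "z \<in> cball 0 R"
      then have "cmod (F z - Lq k z) \<le> C / (real k + 1)" using C by blast
      also have "\<dots> \<le> max C 0 / (real k + 1)" by (intro divide_right_mono) auto
      finally show "cmod (F z - Lq k z) \<le> max C 0 / (real k + 1)" .
    qed
    then show ?thesis by (intro exI[of _ "max C 0"]) auto
  qed
  have cauchy: "uniformly_Cauchy_on (cball 0 R) (\<lambda>k. poly (qn k))" for R
  proof (rule uniformly_Cauchy_onI)
    fix e :: real assume e: "e > 0"
    define R2 where "R2 = \<bar>R\<bar> + \<bar>r0\<bar> + 1"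
    have R2: "R2 > 0" "R \<le> R2" "r0 \<le> R2" unfolding R2_def by auto
    obtain C where C: "C \<ge> 0" "\<forall>k z. R2 + 1 \<le> real k \<longrightarrow> z \<in> cball 0 R2 \<longrightarrow> cmod (F z - Lq k z) \<le> C / (real k + 1)"
      using Lest' by blast
    define N where "N = nat \<lceil>R2 + 1 + 2 * C / (c * e)\<rceil>"
    have Nge: "R2 + 1 + 2 * C / (c * e) \<le> real N" unfolding N_def by (rule real_nat_ceiling_ge)
    have q0: "0 \<le> 2 * C / (c * e)" using C(1) c(1) e by simp
    have N1: "R2 + 1 \<le> real N" using Nge q0 by linarith
    have N2: "2 * C / (c * e) < real N + 1" using Nge R2(1) by linarith
    define M where "M = 2 * C / (c * (real N + 1))"
    have Me: "M < e"
    proof -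
      have ce: "c * e > 0" using c(1) e by simp
      have "2 * C < (real N + 1) * (c * e)" using N2 ce by (simp add: pos_divide_less_eq)
      then have "2 * C < e * (c * (real N + 1))" by (simp add: algebra_simps)
      moreover have "c * (real N + 1) > 0" using c(1) by (simp add: add_pos_nonneg)
      ultimately show ?thesis unfolding M_def by (simp add: divide_less_eq)
    qed
    have "\<forall>z\<in>cball 0 R. \<forall>m\<ge>N. \<forall>k\<ge>N. dist (poly (qn m) z) (poly (qn k) z) < e"
    proof (intro ballI allI impI)
      fix z :: complex and m k :: nat assume z: "z \<in> cball 0 R" and m: "N \<le> m" and k: "N \<le> k"
      have "cmod (poly (qn m - qn k) z) \<le> M"
      proof (rule maxmod_entire[where f="poly (qn m - qn k)" and a=0 and R=R2])
        show "poly (qn m - qn k) holomorphic_on UNIV" by (auto intro!: holomorphic_intros)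
        show "0 < R2" by fact
        show "dist 0 z \<le> R2" using z R2 by simp
      next
        fix w :: complex assume w: "dist 0 w = R2"
        have wc: "w \<in> cball 0 R2" using w by simp
        have cw: "c \<le> cmod (poly B w)" using c(2) w R2 by simp
        have mk: "R2 + 1 \<le> real m" "R2 + 1 \<le> real k" using m k N1 by auto
        have "cmod (poly B w) * cmod (poly (qn m - qn k) w) = cmod (Lq m w - Lq k w)"
          using BqL by (metis norm_mult poly_diff right_diff_distrib)
        also have "\<dots> = cmod ((F w - Lq k w) - (F w - Lq m w))" by simp
        also have "\<dots> \<le> cmod (F w - Lq k w) + cmod (F w - Lq m w)" by (rule norm_triangle_ineq4)
        also have "\<dots> = cmod (F w - Lq m w) + cmod (F w - Lq k w)" by simp
        also have "\<dots> \<le> C / (real m + 1) + C / (real k + 1)"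
          using C(2) mk wc by (intro add_mono) auto
        also have "\<dots> \<le> C / (real N + 1) + C / (real N + 1)"
          using m k C(1) by (intro add_mono divide_left_mono) auto
        also have "\<dots> = 2 * C / (real N + 1)" by (simp add: add_divide_distrib[symmetric])
        also have "\<dots> = c * M" unfolding M_def using c(1) by simp
        finally have "cmod (poly B w) * cmod (poly (qn m - qn k) w) \<le> c * M" .
        moreover have "c * cmod (poly (qn m - qn k) w) \<le> cmod (poly B w) * cmod (poly (qn m - qn k) w)"
          using cw by (simp add: mult_right_mono)
        ultimately show "cmod (poly (qn m - qn k) w) \<le> M" using c(1)
          by (smt (verit) mult_le_cancel_left_pos)
      qed
      then show "dist (poly (qn m) z) (poly (qn k) z) < e" using Me by (simp add: dist_norm)
    qed
    then show "\<exists>N. \<forall>z\<in>cball 0 R. \<forall>m\<ge>N. \<forall>k\<ge>N. dist (poly (qn m) z) (poly (qn k) z) < e" by blast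
  qed
  define g where "g = (\<lambda>z. lim (\<lambda>k. poly (qn k) z))"
  have ul: "uniform_limit (cball 0 R) (\<lambda>k. poly (qn k)) g sequentially" for R
    using Cauchy_uniformly_convergent[OF cauchy[of R]] unfolding uniformly_convergent_uniform_limit_iff g_def .
  have hol: "g holomorphic_on UNIV"
  proof -
    have "g field_differentiable at z" for z
    proof -
      have ul1: "uniform_limit (cball z 1) (\<lambda>k. poly (qn k)) g sequentially"
        by (rule uniform_limit_on_subset[OF ul[of "cmod z + 1"]])
           (auto simp: dist_norm, smt (verit) norm_triangle_ineq2 norm_minus_commute)
      have ev1: "\<forall>\<^sub>F k in sequentially. continuous_on (cball z 1) (poly (qn k)) \<and> poly (qn k) holomorphic_on ball z 1"
      proof (intro always_eventually allI conjI)
        fix k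
        have hk: "poly (qn k) holomorphic_on UNIV" by (auto intro!: holomorphic_intros)
        then show "continuous_on (cball z 1) (poly (qn k))" "poly (qn k) holomorphic_on ball z 1"
          using continuous_on_subset[OF holomorphic_on_imp_continuous_on[OF hk] subset_UNIV]
            holomorphic_on_subset[OF hk subset_UNIV] by auto
      qed
      have "g holomorphic_on ball z 1"
        using holomorphic_uniform_limit[OF ev1 ul1 trivial_limit_sequentially] by blast
      then show ?thesis using holomorphic_on_imp_differentiable_at by (metis centre_in_ball open_ball zero_less_one)
    qed
    then show ?thesis by (simp add: field_differentiable_at_within holomorphic_on_def)
  qed
  have apx: "\<forall>R e. e > 0 \<longrightarrow> (\<exists>k. \<forall>z\<in>cball 0 R. cmod (g z - poly (qn k) z) < e)"
  proof (intro allI impI)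
    fix R e :: real assume "e > 0"
    then have "\<forall>\<^sub>F k in sequentially. \<forall>z\<in>cball 0 R. dist (poly (qn k) z) (g z) < e"
      using ul[of R] unfolding uniform_limit_iff by blast
    then obtain N where "\<forall>k\<ge>N. \<forall>z\<in>cball 0 R. dist (poly (qn k) z) (g z) < e"
      unfolding eventually_sequentially by blast
    then have "\<forall>z\<in>cball 0 R. dist (poly (qn N) z) (g z) < e" by blast
    then show "\<exists>k. \<forall>z\<in>cball 0 R. cmod (g z - poly (qn k) z) < e"
      by (auto simp: dist_norm norm_minus_commute)
  qed
  have eq: "poly B z * g z = F z" for z
  proof -
    have t1: "(\<lambda>k. poly (qn k) z) \<longlonglongrightarrow> g z"
      by (rule tendsto_uniform_limitI[OF ul[of "cmod z"]]) simp
    have t2: "(\<lambda>k. Lq k z) \<longlonglongrightarrow> F z"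
    proof -
      obtain C where C: "C \<ge> 0" "\<forall>k z'. cmod z + 1 \<le> real k \<longrightarrow> z' \<in> cball 0 (cmod z) \<longrightarrow> cmod (F z' - Lq k z') \<le> C / (real k + 1)"
        using Lest' by blast
      have ev: "\<forall>\<^sub>F k in sequentially. norm (F z - Lq k z) \<le> C / (real k + 1)"
        unfolding eventually_sequentially
      proof (intro exI allI impI)
        fix k assume "nat \<lceil>cmod z + 1\<rceil> \<le> k"
        moreover have "cmod z + 1 \<le> real (nat \<lceil>cmod z + 1\<rceil>)" by (rule real_nat_ceiling_ge)
        ultimately have "cmod z + 1 \<le> real k" by linarith
        moreover have "z \<in> cball 0 (cmod z)" by simp
        ultimately show "norm (F z - Lq k z) \<le> C / (real k + 1)" using C(2) by blast
      qed
      have "(\<lambda>k. C / (real k + 1)) \<longlonglongrightarrow> 0"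
        using tendsto_mult_right_zero[OF LIMSEQ_inverse_real_of_nat, of C]
        by (simp add: divide_inverse add.commute)
      then have "(\<lambda>k. F z - Lq k z) \<longlonglongrightarrow> 0"
        by (rule Lim_null_comparison[OF ev])
      then have "(\<lambda>k. F z - (F z - Lq k z)) \<longlonglongrightarrow> F z - 0"
        by (intro tendsto_diff tendsto_const)
      then show ?thesis by simp
    qed
    have "(\<lambda>k. poly B z * poly (qn k) z) \<longlonglongrightarrow> poly B z * g z"
      by (intro tendsto_mult tendsto_const t1)
    moreover have "(\<lambda>k. poly B z * poly (qn k) z) = (\<lambda>k. Lq k z)" using BqL by auto
    ultimately have "(\<lambda>k. Lq k z) \<longlonglongrightarrow> poly B z * g z" by simp
    then show ?thesis using t2 by (rule LIMSEQ_unique)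
  qed
  show ?thesis using hol apx eq by blast
qed


theorem lemma2p2:
  fixes U V :: "complex poly set" and D :: "(complex poly \<times> complex poly) list"
  assumes "in_S U" and "in_S V" and "valid_op D"
  shows "op_maps_poly D U V \<longleftrightarrow> op_maps_closure D U V"
proof -
  have sV: "subsp V" using assms(2) unfolding in_S_def subsp_def by blast
  obtain \<rho>V where \<rho>V: "\<rho>V \<noteq> 0" "\<forall>p. \<rho>V * p \<in> V" using assms(2) unfolding in_S_def by blast
  define n where "n = length D"
  define b where "b i = snd (D!i)" for i
  define a where "a i = fst (D!i)" for i
  define B where "B = (\<Prod>i<n. b i)"
  define c where "c i = a i * (\<Prod>j\<in>{..<n}-{i}. b j)" for i
  define L where "L h z = (\<Sum>i<n. poly (c i) z * (deriv ^^ i) h z)" for h :: "complex \<Rightarrow> complex" and z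
  define Lp where "Lp p = (\<Sum>i<n. c i * (pderiv ^^ i) p)" for p
  have bnz: "b i \<noteq> 0" if "i < n" for i
    using assms(3) that unfolding valid_op_def b_def n_def by simp
  have Bnz: "B \<noteq> 0" unfolding B_def using bnz by (simp add: prod_zero_iff)
  have nopole: "poly (b i) z \<noteq> 0" if "z \<notin> op_poles D" "i < n" for z i
    using that nth_mem unfolding op_poles_def b_def n_def by blast
  have polyB: "poly B z = poly (b i) z * (\<Prod>j\<in>{..<n}-{i}. poly (b j) z)" if "i < n" for z i
    unfolding B_def poly_prod using that by (simp add: prod.remove)
  have finP: "finite (op_poles D)"
  proof (rule finite_subset[OF _ poly_roots_finite[OF Bnz]])
    show "op_poles D \<subseteq> {z. poly B z = 0}"
    proof
      fix z assume "z \<in> op_poles D"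
      then obtain cc where cc: "cc \<in> set D" "poly (snd cc) z = 0" unfolding op_poles_def by blast
      then obtain i where i: "i < n" "D!i = cc" unfolding n_def by (auto simp: in_set_conv_nth)
      then have "poly (b i) z = 0" using cc unfolding b_def by simp
      then show "z \<in> {z. poly B z = 0}" using polyB[OF i(1)] by simp
    qed
  qed
  have key: "poly B z * op_apply D h z = L h z" if "z \<notin> op_poles D" for h z
  proof -
    have "poly B z * op_apply D h z = (\<Sum>i<n. poly B z * ((poly (a i) z / poly (b i) z) * (deriv ^^ i) h z))"
      unfolding op_apply_def a_def b_def n_def by (simp add: sum_distrib_left)
    also have "\<dots> = L h z" unfolding L_def
    proof (rule sum.cong[OF refl])
      fix i assume "i \<in> {..<n}"
      then have i: "i < n" by simp
      have "poly B z * (poly (a i) z / poly (b i) z) = poly (c i) z"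
        unfolding polyB[OF i] c_def poly_mult poly_prod using nopole[OF that i] by (simp add: field_simps)
      then show "poly B z * ((poly (a i) z / poly (b i) z) * (deriv ^^ i) h z) = poly (c i) z * (deriv ^^ i) h z"
        by (metis mult.assoc)
    qed
    finally show ?thesis .
  qed
  have Lpoly: "L (poly p) = poly (Lp p)" for p
    unfolding L_def Lp_def by (rule ext) (simp add: higher_deriv_poly poly_sum)
  have contpoly: "continuous_on UNIV (poly q)" for q :: "complex poly"
    by (simp add: continuous_at_imp_continuous_on)
  show ?thesis
  proof
    assume mp: "op_maps_poly D U V"
    show "op_maps_closure D U V" unfolding op_maps_closure_def
    proof
      fix f assume "f \<in> H_closure U"
      then have hf: "f holomorphic_on UNIV" "appr U f" by (simp_all add: H_closure_iff)
      have "\<forall>k. \<exists>p. p \<in> U \<and> (\<forall>z\<in>cball 0 (real k). cmod (f z - poly p z) < 1 / (real k + 1))"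
      proof
        fix k :: nat
        have "0 < 1 / (real k + 1)" by simp
        then show "\<exists>p. p \<in> U \<and> (\<forall>z\<in>cball 0 (real k). cmod (f z - poly p z) < 1 / (real k + 1))"
          using hf(2) unfolding appr_def by blast
      qed
      from choice[OF this] obtain pn where pn: "\<forall>k. pn k \<in> U \<and> (\<forall>z\<in>cball 0 (real k). cmod (f z - poly (pn k) z) < 1 / (real k + 1))"
        by blast
      have "\<forall>k. \<exists>q. q \<in> V \<and> (\<forall>z. z \<notin> op_poles D \<longrightarrow> op_apply D (poly (pn k)) z = poly q z)"
        using mp pn unfolding op_maps_poly_def by blast
      from choice[OF this] obtain qn where qn: "\<forall>k. qn k \<in> V \<and> (\<forall>z. z \<notin> op_poles D \<longrightarrow> op_apply D (poly (pn k)) z = poly (qn k) z)"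
        by blast
      have BqL: "\<forall>k z. poly B z * poly (qn k) z = poly (Lp (pn k)) z"
      proof (intro allI)
        fix k z
        show "poly B z * poly (qn k) z = poly (Lp (pn k)) z"
        proof (rule eq_off_finite[where S="op_poles D" and f="\<lambda>z. poly B z * poly (qn k) z" and g="poly (Lp (pn k))"])
          show "continuous_on UNIV (\<lambda>z. poly B z * poly (qn k) z)"
            using contpoly by (intro continuous_on_mult) auto
          fix w assume w: "w \<notin> op_poles D"
          then have "poly B w * poly (qn k) w = poly B w * op_apply D (poly (pn k)) w" using qn by simp
          also have "\<dots> = poly (Lp (pn k)) w" using key[OF w] Lpoly by simp
          finally show "poly B w * poly (qn k) w = poly (Lp (pn k)) w" .
        qed (use contpoly finP in auto)
      qed
      have Lest: "\<forall>R. \<exists>C. \<forall>k z. R + 1 \<le> real k \<longrightarrow> z \<in> cball 0 R \<longrightarrow> cmod (L f z - poly (Lp (pn k)) z) \<le> C / (real k + 1)"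
      proof
        fix R :: real
        have "\<forall>i. \<exists>M. M > 0 \<and> (\<forall>z\<in>cball 0 R. cmod (poly (c i) z) \<le> M)"
          using cont_bounded_cball[OF contpoly] by blast
        from choice[OF this] obtain M where M: "\<forall>i. M i > 0 \<and> (\<forall>z\<in>cball 0 R. cmod (poly (c i) z) \<le> M i)"
          by blast
        define C where "C = (\<Sum>i<n. M i * fact i)"
        have Mnn: "0 \<le> M i" for i using M less_imp_le by blast
        have "\<forall>k z. R + 1 \<le> real k \<longrightarrow> z \<in> cball 0 R \<longrightarrow> cmod (L f z - poly (Lp (pn k)) z) \<le> C / (real k + 1)"
        proof (intro allI impI)
          fix k and z :: complex assume k: "R + 1 \<le> real k" and z: "z \<in> cball 0 R"
          have bz: "\<forall>w\<in>ball z 1. cmod (f w - poly (pn k) w) < 1 / (real k + 1)"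
          proof
            fix w assume "w \<in> ball z 1"
            then have "cmod w \<le> real k" using z k unfolding dist_norm
              by (smt (verit) mem_ball mem_cball_0 dist_norm norm_triangle_ineq2 norm_minus_commute)
            then show "cmod (f w - poly (pn k) w) < 1 / (real k + 1)" using pn by simp
          qed
          have d: "cmod ((deriv ^^ i) f z - (deriv ^^ i) (poly (pn k)) z) \<le> fact i * (1 / (real k + 1))" for i
            by (rule deriv_est[OF hf(1) _ bz]) (auto intro!: holomorphic_intros)
          have "L f z - poly (Lp (pn k)) z = L f z - L (poly (pn k)) z" using Lpoly by simp
          also have "\<dots> = (\<Sum>i<n. poly (c i) z * ((deriv ^^ i) f z - (deriv ^^ i) (poly (pn k)) z))"
            unfolding L_def by (simp add: sum_subtractf right_diff_distrib)
          finally have "cmod (L f z - poly (Lp (pn k)) z) \<le> (\<Sum>i<n. cmod (poly (c i) z * ((deriv ^^ i) f z - (deriv ^^ i) (poly (pn k)) z)))"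
            by (simp add: norm_sum)
          also have "\<dots> \<le> (\<Sum>i<n. M i * (fact i * (1 / (real k + 1))))"
            unfolding norm_mult using M z d Mnn by (intro sum_mono mult_mono) auto
          also have "\<dots> = C / (real k + 1)" unfolding C_def by (simp add: sum_divide_distrib)
          finally show "cmod (L f z - poly (Lp (pn k)) z) \<le> C / (real k + 1)" .
        qed
        then show "\<exists>C. \<forall>k z. R + 1 \<le> real k \<longrightarrow> z \<in> cball 0 R \<longrightarrow> cmod (L f z - poly (Lp (pn k)) z) \<le> C / (real k + 1)"
          by blast
      qed
      obtain g where g: "g holomorphic_on UNIV"
        "\<forall>R e. e > 0 \<longrightarrow> (\<exists>k. \<forall>z\<in>cball 0 R. cmod (g z - poly (qn k) z) < e)"
        "\<forall>z. poly B z * g z = L f z"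
        using lim_entire[OF Bnz BqL Lest] by blast
      have "appr V g" unfolding appr_def using g(2) qn by blast
      then have "g \<in> H_closure V" using g(1) by (simp add: H_closure_iff)
      moreover have "\<forall>z. z \<notin> op_poles D \<longrightarrow> op_apply D f z = g z"
      proof (intro allI impI)
        fix z assume z: "z \<notin> op_poles D"
        have "poly B z \<noteq> 0" unfolding B_def poly_prod using nopole[OF z] by (simp add: prod_zero_iff)
        moreover have "poly B z * op_apply D f z = poly B z * g z" using key[OF z] g(3) by simp
        ultimately show "op_apply D f z = g z" by simp
      qed
      ultimately show "\<exists>g\<in>H_closure V. \<forall>z. z \<notin> op_poles D \<longrightarrow> op_apply D f z = g z" by blast
    qed
  next
    assume mc: "op_maps_closure D U V"
    show "op_maps_poly D U V" unfolding op_maps_poly_def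
    proof
      fix p assume "p \<in> U"
      have "appr U (poly p)" unfolding appr_def using \<open>p \<in> U\<close> by force
      then have "poly p \<in> H_closure U" by (auto simp: H_closure_iff intro!: holomorphic_intros)
      then obtain g where g: "g \<in> H_closure V" "\<forall>z. z \<notin> op_poles D \<longrightarrow> op_apply D (poly p) z = g z"
        using mc unfolding op_maps_closure_def by blast
      have gh: "g holomorphic_on UNIV" "appr V g" using g(1) by (simp_all add: H_closure_iff)
      have "\<forall>z. poly B z * g z = poly (Lp p) z"
      proof
        fix z
        show "poly B z * g z = poly (Lp p) z"
        proof (rule eq_off_finite[where S="op_poles D" and f="\<lambda>z. poly B z * g z" and g="poly (Lp p)"])
          show "continuous_on UNIV (\<lambda>z. poly B z * g z)"
            using contpoly holomorphic_on_imp_continuous_on[OF gh(1)] by (intro continuous_on_mult) auto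
          fix w assume w: "w \<notin> op_poles D"
          then have "poly B w * g w = poly B w * op_apply D (poly p) w" using g(2) by simp
          also have "\<dots> = poly (Lp p) w" using key[OF w] Lpoly by simp
          finally show "poly B w * g w = poly (Lp p) w" .
        qed (use contpoly finP in auto)
      qed
      then obtain Q where Q: "g = poly Q"
        using entire_poly[OF holomorphic_on_imp_continuous_on[OF gh(1)] Bnz] by blast
      have "Q \<in> V" using closure_poly[OF sV \<rho>V(1) \<rho>V(2)] gh(2) Q by simp
      then show "\<exists>q\<in>V. \<forall>z. z \<notin> op_poles D \<longrightarrow> op_apply D (poly p) z = poly q z"
        using g(2) Q by blast
    qed
  qed
qed

end
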